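(* Let $d \geq 2$ be an integer and let $Z, U$ be independent random variables with $Z \sim N(0,1)$ and $U \sim \chi^2_d$ (chi-squared with $d$ degrees of freedom). Then for all $\delta > 0$, $p > 0$ and all integers $k \geq 1$, $$\frac{1}{2}\, \mathbb{P}\left( \tfrac{1}{4} Z^2 \geq U \geq \delta^2 \right) k^{-d/p} \;\leq\; \mathbb{P}\left( \delta + \sqrt{U}\sqrt{k^{2/p} - 1} < Z \right) \;\leq\; \frac{ e^{-(1+\delta^2)/2}\, p }{ 2\delta^2 \sqrt{d} } \cdot \frac{ k^{(1-d)/p} }{ \ln k },$$ where for $k=1$ the right-hand side is interpreted as $+\infty$. *)

theory Defs
  imports "HOL-Probability.Probability"
begin

definition chi_squared_density :: "nat \<Rightarrow> real \<Rightarrow> real" where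
  "chi_squared_density d u =
     (if u > 0 then u powr (real d / 2 - 1) * exp (- u / 2) / (2 powr (real d / 2) * Gamma (real d / 2))
      else 0)"

end

theory Submission
  imports Defs
begin

lemma indep_lborel:
  assumes "prob_space M" "prob_space.indep_var M borel Z borel U"
  shows "prob_space.indep_var M lborel Z lborel U"
  using assms by (simp add: prob_space.indep_var_eq[OF assms(1)])

lemma joint:
  assumes M: "prob_space M"
    and Zd: "distributed M lborel Z N"
    and Ud: "distributed M lborel U F"
    and ind: "prob_space.indep_var M lborel Z lborel U"
    and A: "A \<in> sets (borel \<Otimes>\<^sub>M borel)"
  shows "emeasure M {\<omega> \<in> space M. (Z \<omega>, U \<omega>) \<in> A}
     = (\<integral>\<^sup>+u. \<integral>\<^sup>+z. ennreal (N z) * ennreal (F u) * indicator A (z,u) \<partial>lborel \<partial>lborel)"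
proof -
  interpret prob_space M by fact
  have J: "distributed M (lborel \<Otimes>\<^sub>M lborel) (\<lambda>x. (Z x, U x)) (\<lambda>(x, y). ennreal (N x) * ennreal (F y))"
    by (rule distributed_joint_indep[OF _ _ Zd Ud ind]) (auto intro: lborel.sigma_finite_measure_axioms)
  have A': "A \<in> sets (lborel \<Otimes>\<^sub>M lborel)" using A by (simp add: sets_pair_measure_cong[OF sets_lborel sets_lborel])
  have "{\<omega> \<in> space M. (Z \<omega>, U \<omega>) \<in> A} = (\<lambda>x. (Z x, U x)) -` A \<inter> space M" by auto
  also have "emeasure M \<dots> = (\<integral>\<^sup>+x. (\<lambda>(x, y). ennreal (N x) * ennreal (F y)) x * indicator A x \<partial>(lborel \<Otimes>\<^sub>M lborel))"
    by (rule distributed_emeasure[OF J A'])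
  also have "\<dots> = (\<integral>\<^sup>+u. \<integral>\<^sup>+z. (\<lambda>(x, y). ennreal (N x) * ennreal (F y)) (z,u) * indicator A (z,u) \<partial>lborel \<partial>lborel)"
    apply (rule lborel_pair.nn_integral_snd[symmetric])
    using distributed_borel_measurable[OF Zd] distributed_borel_measurable[OF Ud] A' by measurable
  finally show ?thesis by simp
qed



lemma normal_tail:
  fixes a :: real assumes a: "a > 0"
  shows "(\<integral>\<^sup>+z. ennreal (std_normal_density z) * indicator {a<..} z \<partial>lborel)
         \<le> ennreal (std_normal_density a / a)"
proof -
  let ?N = "std_normal_density"
  have "(\<integral>\<^sup>+z. ennreal (?N z) * indicator {a<..} z \<partial>lborel)
      \<le> (\<integral>\<^sup>+z. ennreal (1/a) * (ennreal (z * ?N z) * indicator {a..} z) \<partial>lborel)"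
  proof (intro nn_integral_mono)
    fix z :: real
    show "ennreal (?N z) * indicator {a<..} z \<le> ennreal (1/a) * (ennreal (z * ?N z) * indicator {a..} z)"
    proof (cases "a < z")
      case True
      have "?N z \<le> 1/a * (z * ?N z)"
        using True a normal_density_nonneg[of 0 1 z]
        by (simp add: field_simps mult_right_mono)
      moreover have "ennreal (1/a) * ennreal (z * ?N z) = ennreal (1/a * (z * ?N z))"
        by (rule ennreal_mult[symmetric]) (use True a normal_density_nonneg[of 0 1 z] in auto)
      ultimately show ?thesis using True by (auto simp: indicator_def intro: ennreal_leI)
    qed simp
  qed
  also have "\<dots> = ennreal (1/a) * (\<integral>\<^sup>+z. ennreal (z * ?N z) * indicator {a..} z \<partial>lborel)"
    by (rule nn_integral_cmult) measurable
  also have "(\<integral>\<^sup>+z. ennreal (z * ?N z) * indicator {a..} z \<partial>lborel) = ennreal (0 - (- ?N a))"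
  proof (rule nn_integral_FTC_atLeast)
    have L: "LIM x at_top. x^2 * (1/2::real) :> at_top"
      by (rule filterlim_at_top_mult_tendsto_pos[OF tendsto_const]) (auto intro: filterlim_pow_at_top filterlim_ident)
    have "((\<lambda>x::real. exp (-(x^2*(1/2)))) \<longlongrightarrow> 0) at_top"
      by (rule filterlim_compose[OF exp_at_bot filterlim_compose[OF filterlim_uminus_at_bot_at_top L]])
    hence "((\<lambda>x::real. - (1 / sqrt (2 * pi) * exp (-(x^2*(1/2))))) \<longlongrightarrow> - (1 / sqrt (2 * pi) * 0)) at_top"
      by (intro tendsto_minus tendsto_mult tendsto_const)
    then show "((\<lambda>x. - ?N x) \<longlongrightarrow> 0) at_top"
      by (simp add: std_normal_density_def)
    show "(\<lambda>z. z * ?N z) \<in> borel_measurable borel" by measurable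
    fix x :: real assume "a \<le> x"
    show "0 \<le> x * ?N x" using \<open>a \<le> x\<close> a normal_density_nonneg[of 0 1 x] by simp
    show "((\<lambda>x. - ?N x) has_real_derivative x * ?N x) (at x)"
      unfolding std_normal_density_def
      by (auto intro!: derivative_eq_intros simp: field_simps)
  qed
  also have "ennreal (1/a) * ennreal (0 - (- ?N a)) = ennreal (?N a / a)"
    using a normal_density_nonneg[of 0 1 a] by (simp add: ennreal_mult[symmetric])
  finally show ?thesis .
qed

lemma gamma_int:
  fixes a b :: real assumes a: "a > 0" and b: "b > 0"
  shows "(\<integral>\<^sup>+u. ennreal (indicator {0<..} u * u powr (a - 1) * exp (- (b * u))) \<partial>lborel)
         = ennreal (Gamma a / b powr a)"
proof -
  let ?f = "\<lambda>u::real. ennreal (indicator {0<..} u * u powr (a - 1) * exp (- (b * u)))"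
  have "(\<integral>\<^sup>+u. ?f u \<partial>lborel) = \<bar>1/b\<bar> * (\<integral>\<^sup>+x. ?f (0 + 1/b * x) \<partial>lborel)"
    by (rule nn_integral_real_affine) (use b in auto)
  also have "(\<integral>\<^sup>+x. ?f (0 + 1/b * x) \<partial>lborel)
      = (\<integral>\<^sup>+x. ennreal (b powr (1 - a)) * ennreal (indicator {0..} x * x powr (a - 1) / exp x) \<partial>lborel)"
  proof (intro nn_integral_cong)
    fix x :: real
    show "?f (0 + 1/b * x) = ennreal (b powr (1 - a)) * ennreal (indicator {0..} x * x powr (a - 1) / exp x)"
    proof (cases "x > 0")
      case True
      have "(x / b) powr (a - 1) = x powr (a - 1) / b powr (a - 1)"
        using True b by (simp add: powr_divide)
      moreover have "1 / b powr (a - 1) = b powr (1 - a)"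
        using b by (simp add: powr_minus_divide[symmetric] powr_minus)
      ultimately have "(x / b) powr (a - 1) = b powr (1 - a) * x powr (a - 1)"
        by (metis (no_types, lifting) mult.commute times_divide_eq_right divide_real_def mult_1)
      then show ?thesis using True b
        by (simp add: ennreal_mult[symmetric] exp_minus field_simps)
    next
      case False
      then show ?thesis using b by (cases "x = 0") (auto simp: indicator_def zero_less_mult_iff zero_less_divide_iff)
    qed
  qed
  also have "\<dots> = ennreal (b powr (1 - a)) * (\<integral>\<^sup>+x. ennreal (indicator {0..} x * x powr (a - 1) / exp x) \<partial>lborel)"
    by (rule nn_integral_cmult) measurable
  also have "(\<integral>\<^sup>+x. ennreal (indicator {0..} x * x powr (a - 1) / exp x) \<partial>lborel) = ennreal (Gamma a)"
    using Gamma_conv_nn_integral_real[OF a] by simp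
  also have "ennreal \<bar>1/b\<bar> * (ennreal (b powr (1 - a)) * ennreal (Gamma a)) = ennreal (1/b * (b powr (1 - a) * Gamma a))"
    using b a by (simp add: ennreal_mult[symmetric] Gamma_real_pos less_imp_le)
  also have "1/b * (b powr (1 - a) * Gamma a) = Gamma a / b powr a"
    using b by (simp add: powr_diff field_simps)
  finally show ?thesis .
qed


lemma aux_ineq: fixes a g h :: real
  assumes "(a/2)^2 * g \<le> a * h" shows "a * (a * g) \<le> a * (4 * h)"
proof -
  have "a * (a * g) = 4 * ((a/2)^2 * g)" by (simp add: power2_eq_square)
  also have "\<dots> \<le> 4 * (a * h)" using assms by simp
  finally show ?thesis by simp
qed

lemma gamma_ratio:
  fixes d :: nat assumes d: "d \<ge> 2"
  shows "Gamma ((real d - 1) / 2) * sqrt (real d) \<le> 2 * sqrt 2 * Gamma (real d / 2)"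
proof -
  define a where "a = real d / 2"
  have a1: "a \<ge> 1" using d by (simp add: a_def)
  have "(ln \<circ> Gamma) ((1 - 1/2) *\<^sub>R a + (1/2) *\<^sub>R (a + 1)) \<le> (1 - 1/2) * (ln \<circ> Gamma) a + 1/2 * (ln \<circ> Gamma) (a + 1)"
    by (rule convex_onD[OF log_convex_Gamma_real]) (use a1 in auto)
  moreover have "(1 - 1/2) *\<^sub>R a + (1/2) *\<^sub>R (a + 1) = a + 1/2" by (simp add: field_simps)
  ultimately have "2 * ln (Gamma (a + 1/2)) \<le> ln (Gamma a) + ln (Gamma (a + 1))"
    by simp
  moreover have "Gamma a > 0" "Gamma (a + 1) > 0" "Gamma (a + 1/2) > 0"
    using a1 by (auto intro!: Gamma_real_pos)
  ultimately have "ln (Gamma (a + 1/2) ^ 2) \<le> ln (Gamma a * Gamma (a + 1))"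
    by (simp add: ln_mult ln_realpow)
  hence "Gamma (a + 1/2) ^ 2 \<le> Gamma a * Gamma (a + 1)"
    using \<open>Gamma a > 0\<close> \<open>Gamma (a + 1) > 0\<close> \<open>Gamma (a + 1/2) > 0\<close> by simp
  also have "Gamma (a + 1) = a * Gamma a" using Gamma_plus1[of a] a1 nonpos_Ints_nonpos[of a] by force
  finally have G1: "Gamma (a + 1/2) ^ 2 \<le> a * Gamma a ^ 2" by (simp add: power2_eq_square mult.left_commute)
  have "Gamma (a + 1/2) = (a - 1/2) * Gamma (a - 1/2)"
    proof -
    have "a - 1/2 \<notin> \<int>\<^sub>\<le>\<^sub>0" using a1 nonpos_Ints_nonpos[of "a - 1/2"] by force
    from Gamma_plus1[OF this] show ?thesis by (simp add: algebra_simps)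
  qed
  with G1 have G2: "(a - 1/2)^2 * Gamma (a - 1/2) ^ 2 \<le> a * Gamma a ^ 2"
    by (simp add: power_mult_distrib)
  have "a - 1/2 \<ge> a/2" using a1 by simp
  hence "(a - 1/2)^2 \<ge> (a/2)^2" using a1 by (intro power_mono) auto
  hence "(a/2)^2 * Gamma (a - 1/2) ^ 2 \<le> (a - 1/2)^2 * Gamma (a - 1/2) ^ 2"
    by (intro mult_right_mono) auto
  with G2 have "(a/2)^2 * Gamma (a - 1/2) ^ 2 \<le> a * Gamma a ^ 2" by linarith
  hence "a * (a * Gamma (a - 1/2) ^ 2) \<le> a * (4 * Gamma a ^ 2)"
    by (rule aux_ineq)
  hence G3: "a * Gamma (a - 1/2) ^ 2 \<le> 4 * Gamma a ^ 2" using a1 by simp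
  have e1: "(real d - 1) / 2 = a - 1/2" by (simp add: a_def field_simps)
  have e2: "real d = 2 * a" by (simp add: a_def)
  have "(Gamma ((real d - 1) / 2) * sqrt (real d))^2 = Gamma (a - 1/2) ^ 2 * real d"
    unfolding e1 by (simp add: power_mult_distrib)
  also have "\<dots> = 2 * (a * Gamma (a - 1/2) ^ 2)" unfolding e2 by (simp add: algebra_simps)
  also have "\<dots> \<le> 2 * (4 * Gamma a ^ 2)" using G3 by simp
  also have "\<dots> = (2 * sqrt 2 * Gamma a)^2"
    by (simp add: power_mult_distrib)
  finally have sq: "(Gamma ((real d - 1) / 2) * sqrt (real d))^2 \<le> (2 * sqrt 2 * Gamma a)^2" .
  have Gp: "Gamma a > 0" using a1 by (intro Gamma_real_pos) simp
  have "Gamma ((real d - 1) / 2) * sqrt (real d) \<le> 2 * sqrt 2 * Gamma a"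
    by (rule power2_le_imp_le[OF sq]) (use Gp in simp)
  then show ?thesis by (simp add: a_def)
qed



lemma exp_neg_le_inv: fixes y :: real assumes "y > 0" shows "exp (- y) \<le> 1 / (exp 1 * y)"
proof -
  have "y \<le> exp (y - 1)" using exp_ge_add_one_self[of "y - 1"] by simp
  hence "exp 1 * y \<le> exp 1 * exp (y - 1)" by simp
  also have "exp 1 * exp (y - 1) = exp y" by (simp add: exp_add[symmetric])
  finally have "exp 1 * y \<le> exp y" .
  hence "1 / exp y \<le> 1 / (exp 1 * y)" using assms by (intro divide_left_mono) auto
  thus ?thesis by (simp add: exp_minus field_simps)
qed

lemma ln_sq_le: fixes x :: real assumes "x \<ge> 0" shows "ln (1 + x^2) \<le> 2 * x"
proof -
  have "ln (1 + x^2) \<le> ln ((1 + x)^2)"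
    using assms by (subst ln_le_cancel_iff) (auto simp: power2_eq_square algebra_simps add_pos_nonneg)
  also have "\<dots> = 2 * ln (1 + x)" using assms by (simp add: ln_realpow)
  also have "\<dots> \<le> 2 * x" using ln_add_one_self_le_self[OF assms] by simp
  finally show ?thesis .
qed

lemma pi_e_ge_8: "8 \<le> pi * exp (1::real)"
proof -
  have h: "-(exp 1 - 5837465777 / 2147483648) \<le> inverse (2 ^ 32::real)"
    using e_approx_32 abs_ge_minus_self order_trans by blast
  hence "exp (1::real) \<ge> 8/3" by simp
  moreover have "pi \<ge> 3" using pi_gt3 by simp
  ultimately have "3 * (8/3) \<le> pi * exp (1::real)" by (intro mult_mono) auto
  thus ?thesis by simp
qed

lemma alg_id: fixes P E1 E2 G e s y K \<delta> c :: real
  assumes "K > 0" "\<delta> > 0" "c > 0" "y > 0" "e > 0" "s > 0"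
  shows "(P * E1 / K) * ((G * (1 / (e * (\<delta> * c * y))) * E2 / s) / \<delta>)
       = G / (s * e * \<delta>\<^sup>2 * c * K) * ((P / y) * (E1 * E2))"
  using assms by (simp add: field_simps power2_eq_square)

lemma up_point_gen:
  fixes u c \<delta> K a :: real
  assumes u: "u > 0" and c: "c > 0" and \<delta>: "\<delta> > 0" and K: "K > 0"
  shows "(u powr (a - 1) * exp (- u / 2) / K) * (std_normal_density (\<delta> + sqrt u * c) / (\<delta> + sqrt u * c))
       \<le> exp (- \<delta>\<^sup>2 / 2) / (sqrt (2 * pi) * exp 1 * \<delta>\<^sup>2 * c * K)
           * (u powr (a - 1/2 - 1) * exp (- ((1 + c\<^sup>2) / 2 * u)))"
proof -
  define y where "y = sqrt u"
  have y: "y > 0" using u by (simp add: y_def)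
  have uy: "u = y^2" using u by (simp add: y_def)
  define x where "x = \<delta> + y * c"
  have x: "x \<ge> \<delta>" using y c by (simp add: x_def)
  let ?N = std_normal_density
  have N0: "?N x \<ge> 0" by (rule normal_density_nonneg)
  have A: "?N x / x \<le> ?N x / \<delta>" using x \<delta> N0 by (intro divide_left_mono) auto
  have "- (x^2) / 2 = - \<delta>\<^sup>2 / 2 + - (\<delta> * c * y) + - (c\<^sup>2 * u / 2)"
    unfolding x_def uy by (simp add: power2_eq_square field_simps)
  hence Nx: "?N x = exp (- \<delta>\<^sup>2 / 2) * exp (- (\<delta> * c * y)) * exp (- (c\<^sup>2 * u / 2)) / sqrt (2 * pi)"
    unfolding std_normal_density_def by (simp add: exp_add[symmetric])
  have B: "exp (- (\<delta> * c * y)) \<le> 1 / (exp 1 * (\<delta> * c * y))"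
    by (rule exp_neg_le_inv) (use \<delta> c y in simp)
  have "?N x \<le> exp (- \<delta>\<^sup>2 / 2) * (1 / (exp 1 * (\<delta> * c * y))) * exp (- (c\<^sup>2 * u / 2)) / sqrt (2 * pi)"
    unfolding Nx by (intro divide_right_mono mult_right_mono mult_left_mono B) auto
  hence "?N x / \<delta> \<le> (exp (- \<delta>\<^sup>2 / 2) * (1 / (exp 1 * (\<delta> * c * y))) * exp (- (c\<^sup>2 * u / 2)) / sqrt (2 * pi)) / \<delta>"
    using \<delta> by (intro divide_right_mono) auto
  with A have C: "?N x / x \<le> (exp (- \<delta>\<^sup>2 / 2) * (1 / (exp 1 * (\<delta> * c * y))) * exp (- (c\<^sup>2 * u / 2)) / sqrt (2 * pi)) / \<delta>"
    by linarith
  have F0: "u powr (a - 1) * exp (- u / 2) / K \<ge> 0" using K by simp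
  have "(u powr (a - 1) * exp (- u / 2) / K) * (?N x / x)
      \<le> (u powr (a - 1) * exp (- u / 2) / K) * ((exp (- \<delta>\<^sup>2 / 2) * (1 / (exp 1 * (\<delta> * c * y))) * exp (- (c\<^sup>2 * u / 2)) / sqrt (2 * pi)) / \<delta>)"
    by (rule mult_left_mono[OF C F0])
  also have "\<dots> = exp (- \<delta>\<^sup>2 / 2) / (sqrt (2 * pi) * exp 1 * \<delta>\<^sup>2 * c * K)
           * ((u powr (a - 1) / y) * (exp (- u / 2) * exp (- (c\<^sup>2 * u / 2))))"
    by (rule alg_id) (use K \<delta> c y in auto)
  also have "u powr (a - 1) / y = u powr (a - 1/2 - 1)"
    using u by (simp add: y_def powr_half_sqrt[symmetric] powr_diff[symmetric] algebra_simps)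
  also have "exp (- u / 2) * exp (- (c\<^sup>2 * u / 2)) = exp (- ((1 + c\<^sup>2) / 2 * u))"
    by (simp add: exp_add[symmetric] field_simps)
  finally show ?thesis by (simp add: x_def y_def)
qed

lemma low_point_gen:
  fixes v s K a :: real
  assumes v: "v > 0" and s: "s > 0" "s \<le> 1" and K: "K > 0"
  shows "s * ((s * v) powr (a - 1) * exp (- (s * v) / 2) / K) \<ge> s powr a * (v powr (a - 1) * exp (- v / 2) / K)"
proof -
  have ss: "s * s powr (a - 1) = s powr a"
  proof -
    have "s powr a = s powr (1 + (a - 1))" by simp
    also have "\<dots> = s powr 1 * s powr (a - 1)" by (rule powr_add)
    finally show ?thesis using s by simp
  qed
  have "s * (s * v) powr (a - 1) = s powr a * v powr (a - 1)"
    using s v by (simp add: powr_mult ss mult.assoc[symmetric])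
  hence eq: "s * ((s * v) powr (a - 1) * exp (- (s * v) / 2) / K) = s powr a * v powr (a - 1) * exp (- (s * v) / 2) / K"
    by (metis (no_types, lifting) mult.assoc times_divide_eq_right)
  have "exp (- v / 2) \<le> exp (- (s * v) / 2)"
    using s v by (simp add: mult_left_le_one_le mult_le_cancel_right1)
  hence "s powr a * v powr (a - 1) * exp (- v / 2) / K \<le> s powr a * v powr (a - 1) * exp (- (s * v) / 2) / K"
    using K by (intro divide_right_mono mult_left_mono) auto
  thus ?thesis unfolding eq by (simp add: mult.assoc)
qed



lemma final_abs:
  fixes A G1 G2 Q W r2 sp e eh \<delta> c p sd L :: real
  assumes pos: "A > 0" "G2 > 0" "Q > 0" "W > 0" "r2 > 0" "sp > 0" "e > 0" "eh > 0" "\<delta> > 0" "c > 0"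
      "p > 0" "sd > 0" "L > 0" "G1 \<ge> 0"
    and r2: "r2 * r2 = 2"
    and g: "G1 * sd \<le> 2 * r2 * G2"
    and l: "L \<le> p * c"
    and k: "2 * r2 \<le> sp * (e * eh)"
  shows "A / ((r2 * sp) * e * \<delta>\<^sup>2 * c * ((W * r2) * G2)) * (G1 / (Q / W))
         \<le> A * eh * p / (2 * \<delta>\<^sup>2 * sd) * ((1 / Q) / L)"
proof -
  have e1: "A / ((r2 * sp) * e * \<delta>\<^sup>2 * c * ((W * r2) * G2)) * (G1 / (Q / W))
      = A / (2 * \<delta>\<^sup>2 * Q) * (G1 / (sp * e * c * G2))"
    using pos r2 by (simp add: field_simps power2_eq_square)
  have e2: "A * eh * p / (2 * \<delta>\<^sup>2 * sd) * ((1 / Q) / L) = A / (2 * \<delta>\<^sup>2 * Q) * (eh * p / (sd * L))"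
    using pos by (simp add: field_simps power2_eq_square)
  have "G1 * sd * L \<le> (2 * r2 * G2) * (p * c)"
    by (rule mult_mono[OF g l]) (use pos in auto)
  also have "\<dots> \<le> (sp * (e * eh)) * G2 * (p * c)"
    using k pos by (simp add: mult_right_mono)
  finally have key: "G1 * (sd * L) \<le> (eh * p) * (sp * e * c * G2)" by (simp add: ac_simps)
  have "G1 / (sp * e * c * G2) \<le> eh * p / (sd * L)"
    using key pos by (simp add: divide_simps ac_simps)
  hence "A / (2 * \<delta>\<^sup>2 * Q) * (G1 / (sp * e * c * G2)) \<le> A / (2 * \<delta>\<^sup>2 * Q) * (eh * p / (sd * L))"
    using pos by (intro mult_left_mono) auto
  thus ?thesis unfolding e1 e2 .
qed



theorem proposition1:
  fixes M :: "'a measure" and Z U :: "'a \<Rightarrow> real" and d :: nat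
    and \<delta> p :: real and k :: nat
  assumes "prob_space M"
    and "d \<ge> 2"
    and "distributed M lborel Z std_normal_density"
    and "distributed M lborel U (chi_squared_density d)"
    and "prob_space.indep_var M borel Z borel U"
    and "\<delta> > 0" and "p > 0" and "k \<ge> 1"
  shows "1 / 2 * measure M {\<omega> \<in> space M. (Z \<omega>)\<^sup>2 / 4 \<ge> U \<omega> \<and> U \<omega> \<ge> \<delta>\<^sup>2}
            * real k powr (- real d / p)
         \<le> measure M {\<omega> \<in> space M. \<delta> + sqrt (U \<omega>) * sqrt (real k powr (2 / p) - 1) < Z \<omega>}
       \<and> (k \<ge> 2 \<longrightarrow>
          measure M {\<omega> \<in> space M. \<delta> + sqrt (U \<omega>) * sqrt (real k powr (2 / p) - 1) < Z \<omega>}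
            \<le> exp (- (1 + \<delta>\<^sup>2) / 2) * p / (2 * \<delta>\<^sup>2 * sqrt (real d))
               * (real k powr ((1 - real d) / p) / ln (real k)))"
proof -
  interpret P: prob_space M by fact
  note d = assms(2) and \<delta> = assms(6) and p = assms(7) and k1 = assms(8)
  let ?N = std_normal_density
  define F where "F = chi_squared_density d"
  define K where "K = 2 powr (real d / 2) * Gamma (real d / 2)"
  have Kpos: "K > 0" unfolding K_def using d by (intro mult_pos_pos Gamma_real_pos) auto
  have Fdef: "F u = (if u > 0 then u powr (real d / 2 - 1) * exp (- u / 2) / K else 0)" for u
    by (simp add: F_def K_def chi_squared_density_def)
  have F0: "F u \<ge> 0" for u using Kpos by (simp add: Fdef)
  have Fm[measurable]: "F \<in> borel_measurable borel"
    unfolding F_def chi_squared_density_def by measurable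
  define c where "c = sqrt (real k powr (2 / p) - 1)"
  have kp1: "real k powr (2 / p) \<ge> 1" using k1 p by (intro ge_one_powr_ge_zero) auto
  have c0: "c \<ge> 0" using kp1 by (simp add: c_def)
  have c2: "c\<^sup>2 = real k powr (2 / p) - 1" using kp1 by (simp add: c_def)
  define T where "T a = (\<integral>\<^sup>+z. ennreal (?N z) * indicator {a<..} z \<partial>lborel)" for a
  have Tm[measurable]: "T \<in> borel_measurable borel"
  proof -
    have "(\<lambda>a. \<integral>\<^sup>+z. ennreal (?N z) * (if a < z then 1 else 0) \<partial>lborel) \<in> borel_measurable borel"
      by measurable
    moreover have "T = (\<lambda>a. \<integral>\<^sup>+z. ennreal (?N z) * (if a < z then 1 else 0) \<partial>lborel)"
      unfolding T_def by (intro ext nn_integral_cong) (auto simp: indicator_def)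
    ultimately show ?thesis by simp
  qed
  have Tanti: "T b \<le> T a" if "a \<le> b" for a b
    unfolding T_def using that by (intro nn_integral_mono) (auto simp: indicator_def)
  have ind: "prob_space.indep_var M lborel Z lborel U"
    by (rule indep_lborel[OF assms(1) assms(5)])
  have Zd: "distributed M lborel Z ?N" by fact
  have Ud: "distributed M lborel U F" using assms(4) by (simp add: F_def)
  define A1 where "A1 = {x::real\<times>real. \<delta> + sqrt (snd x) * c < fst x}"
  define A2 where "A2 = {x::real\<times>real. snd x \<le> (fst x)\<^sup>2 / 4 \<and> \<delta>\<^sup>2 \<le> snd x}"
  have A1m: "A1 \<in> sets (borel \<Otimes>\<^sub>M borel)"
  proof -
    have "{x \<in> space (borel \<Otimes>\<^sub>M borel). \<delta> + sqrt (snd x) * c < fst x} \<in> sets (borel \<Otimes>\<^sub>M borel)"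
      by measurable
    thus ?thesis by (simp add: A1_def space_pair_measure)
  qed
  have A2m: "A2 \<in> sets (borel \<Otimes>\<^sub>M borel)"
  proof -
    have "{x \<in> space (borel \<Otimes>\<^sub>M borel). snd x \<le> (fst x)\<^sup>2 / 4 \<and> \<delta>\<^sup>2 \<le> snd x} \<in> sets (borel \<Otimes>\<^sub>M borel)"
      by measurable
    thus ?thesis by (simp add: A2_def space_pair_measure)
  qed
  have A2ind[measurable]: "(\<lambda>z. indicator A2 (z,u) :: ennreal) \<in> borel_measurable borel" for u
  proof -
    have "(\<lambda>z. (z,u)) \<in> borel \<rightarrow>\<^sub>M borel \<Otimes>\<^sub>M borel" by measurable
    from measurable_compose[OF this borel_measurable_indicator[OF A2m]] show ?thesis by (simp add: comp_def)
  qed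
  define E1 where "E1 = {\<omega> \<in> space M. \<delta> + sqrt (U \<omega>) * c < Z \<omega>}"
  define EA where "EA = {\<omega> \<in> space M. (Z \<omega>)\<^sup>2 / 4 \<ge> U \<omega> \<and> U \<omega> \<ge> \<delta>\<^sup>2}"
  have P1: "emeasure M E1 = (\<integral>\<^sup>+u. ennreal (F u) * T (\<delta> + sqrt u * c) \<partial>lborel)"
  proof -
    have "E1 = {\<omega> \<in> space M. (Z \<omega>, U \<omega>) \<in> A1}" by (simp add: E1_def A1_def)
    hence "emeasure M E1 = (\<integral>\<^sup>+u. \<integral>\<^sup>+z. ennreal (?N z) * ennreal (F u) * indicator A1 (z,u) \<partial>lborel \<partial>lborel)"
      using joint[OF assms(1) Zd Ud ind A1m] by simp
    also have "\<dots> = (\<integral>\<^sup>+u. \<integral>\<^sup>+z. ennreal (F u) * (ennreal (?N z) * indicator {\<delta> + sqrt u * c<..} z) \<partial>lborel \<partial>lborel)"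
      by (intro nn_integral_cong) (auto simp: A1_def indicator_def ac_simps)
    also have "\<dots> = (\<integral>\<^sup>+u. ennreal (F u) * T (\<delta> + sqrt u * c) \<partial>lborel)"
      unfolding T_def by (intro nn_integral_cong nn_integral_cmult) measurable
    finally show ?thesis .
  qed
  have PA: "emeasure M EA = (\<integral>\<^sup>+u. ennreal (F u) * (\<integral>\<^sup>+z. ennreal (?N z) * indicator A2 (z,u) \<partial>lborel) \<partial>lborel)"
  proof -
    have "EA = {\<omega> \<in> space M. (Z \<omega>, U \<omega>) \<in> A2}" by (auto simp: EA_def A2_def)
    hence "emeasure M EA = (\<integral>\<^sup>+u. \<integral>\<^sup>+z. ennreal (?N z) * ennreal (F u) * indicator A2 (z,u) \<partial>lborel \<partial>lborel)"
      using joint[OF assms(1) Zd Ud ind A2m] by simp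
    also have "\<dots> = (\<integral>\<^sup>+u. \<integral>\<^sup>+z. ennreal (F u) * (ennreal (?N z) * indicator A2 (z,u)) \<partial>lborel \<partial>lborel)"
      by (intro nn_integral_cong) (auto simp: ac_simps)
    also have "\<dots> = (\<integral>\<^sup>+u. ennreal (F u) * (\<integral>\<^sup>+z. ennreal (?N z) * indicator A2 (z,u) \<partial>lborel) \<partial>lborel)"
      using A2ind by (intro nn_integral_cong nn_integral_cmult) measurable
    finally show ?thesis .
  qed
  have T0: "T a \<ge> 0" for a by simp
  define s where "s = 1 / (1 + c\<^sup>2)"
  have s0: "s > 0" and s1: "s \<le> 1" using c0 by (auto simp: s_def add_pos_nonneg)
  have spow: "s powr (real d / 2) = real k powr (- real d / p)"
  proof -
    have "s = real k powr (- (2 / p))" using k1 by (simp add: s_def c2 powr_minus_divide)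
    hence "s powr (real d / 2) = real k powr (- (2 / p) * (real d / 2))" by (simp add: powr_powr)
    also have "- (2 / p) * (real d / 2) = - real d / p" by simp
    finally show ?thesis .
  qed
  have sc: "sqrt s * c \<le> 1"
  proof -
    have "(sqrt s * c)\<^sup>2 = c\<^sup>2 / (1 + c\<^sup>2)" using s0 by (simp add: power_mult_distrib s_def)
    also have "\<dots> \<le> 1" by (simp add: add_pos_nonneg)
    finally have "(sqrt s * c)\<^sup>2 \<le> 1\<^sup>2" by simp
    thus ?thesis by (rule power2_le_imp_le) simp
  qed
  define g where "g u = ennreal (F u) * T (\<delta> + sqrt u * c)" for u
  have gm[measurable]: "g \<in> borel_measurable borel" unfolding g_def[abs_def] by measurable
  define E2 where "E2 = (\<integral>\<^sup>+v. ennreal (F v) * T (\<delta> + sqrt v) \<partial>lborel)"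
  have L1: "ennreal (s powr (real d / 2)) * E2 \<le> emeasure M E1"
  proof -
    have "emeasure M E1 = (\<integral>\<^sup>+u. g u \<partial>lborel)" by (simp add: P1 g_def)
    also have "\<dots> = \<bar>s\<bar> * (\<integral>\<^sup>+v. g (0 + s * v) \<partial>lborel)"
      by (rule nn_integral_real_affine) (use s0 in auto)
    also have "\<dots> = (\<integral>\<^sup>+v. ennreal s * g (s * v) \<partial>lborel)"
      using s0 by (subst nn_integral_cmult) auto
    also have "\<dots> \<ge> (\<integral>\<^sup>+v. ennreal (s powr (real d / 2)) * (ennreal (F v) * T (\<delta> + sqrt v)) \<partial>lborel)"
    proof (intro nn_integral_mono)
      fix v :: real
      show "ennreal (s powr (real d / 2)) * (ennreal (F v) * T (\<delta> + sqrt v)) \<le> ennreal s * g (s * v)"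
      proof (cases "v > 0")
        case False
        then show ?thesis by (simp add: Fdef)
      next
        case True
        have h1: "s powr (real d / 2) * F v \<le> s * F (s * v)"
          using low_point_gen[OF True s0 s1 Kpos, of "real d / 2"] True s0 by (simp add: Fdef)
        have h2: "T (\<delta> + sqrt v) \<le> T (\<delta> + sqrt (s * v) * c)"
        proof (rule Tanti)
          have "sqrt (s * v) * c = sqrt v * (sqrt s * c)" by (simp add: real_sqrt_mult)
          also have "\<dots> \<le> sqrt v * 1" using sc True by (intro mult_left_mono) auto
          finally show "\<delta> + sqrt (s * v) * c \<le> \<delta> + sqrt v" by simp
        qed
        have "ennreal (s powr (real d / 2) * F v) * T (\<delta> + sqrt v) \<le> ennreal (s * F (s * v)) * T (\<delta> + sqrt (s * v) * c)"
          by (rule mult_mono[OF ennreal_leI[OF h1] h2]) auto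
        thus ?thesis using s0 F0 by (simp add: g_def ennreal_mult mult.assoc)
      qed
    qed
    also have "(\<integral>\<^sup>+v. ennreal (s powr (real d / 2)) * (ennreal (F v) * T (\<delta> + sqrt v)) \<partial>lborel)
        = ennreal (s powr (real d / 2)) * E2"
      unfolding E2_def by (rule nn_integral_cmult) measurable
    finally show ?thesis .
  qed
  have Nsym: "?N (- x) = ?N x" for x by (simp add: std_normal_density_def)
  have Tneg: "(\<integral>\<^sup>+z. ennreal (?N z) * indicator {a<..} (- z) \<partial>lborel) = T a" for a
  proof -
    have "(\<integral>\<^sup>+z. ennreal (?N z) * indicator {a<..} (- z) \<partial>lborel)
        = ennreal \<bar>- 1::real\<bar> * (\<integral>\<^sup>+z. ennreal (?N (0 + (- 1) * z)) * indicator {a<..} (- (0 + (- 1) * z)) \<partial>lborel)"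
      by (rule nn_integral_real_affine) auto
    also have "\<dots> = T a" by (simp add: Nsym T_def)
    finally show ?thesis .
  qed
  have H: "(\<integral>\<^sup>+z. ennreal (?N z) * indicator A2 (z,u) \<partial>lborel) \<le> ennreal 2 * T (\<delta> + sqrt u)"
    if u: "u \<noteq> \<delta>\<^sup>2" for u
  proof (cases "u < \<delta>\<^sup>2")
    case True
    hence "(\<integral>\<^sup>+z. ennreal (?N z) * indicator A2 (z,u) \<partial>lborel) = (\<integral>\<^sup>+(z::real). 0 \<partial>lborel)"
      by (intro nn_integral_cong) (auto simp: A2_def)
    thus ?thesis by simp
  next
    case False
    with u have ud: "u > \<delta>\<^sup>2" by simp
    have su: "\<delta> < sqrt u"
      using real_sqrt_less_mono[OF ud] \<delta> by simp
    have "(\<integral>\<^sup>+z. ennreal (?N z) * indicator A2 (z,u) \<partial>lborel)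
        \<le> (\<integral>\<^sup>+z. ennreal (?N z) * indicator {\<delta> + sqrt u<..} z + ennreal (?N z) * indicator {\<delta> + sqrt u<..} (- z) \<partial>lborel)"
    proof (intro nn_integral_mono)
      fix z :: real
      show "ennreal (?N z) * indicator A2 (z,u) \<le> ennreal (?N z) * indicator {\<delta> + sqrt u<..} z + ennreal (?N z) * indicator {\<delta> + sqrt u<..} (- z)"
      proof (cases "(z,u) \<in> A2")
        case False thus ?thesis by simp
      next
        case True
        hence "4 * u \<le> z\<^sup>2" by (simp add: A2_def)
        hence "sqrt (4 * u) \<le> sqrt (z\<^sup>2)" by (rule real_sqrt_le_mono)
        hence "2 * sqrt u \<le> \<bar>z\<bar>" by (simp add: real_sqrt_mult)
        hence "\<delta> + sqrt u < z \<or> \<delta> + sqrt u < - z" using su by (cases "z \<ge> 0") auto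
        thus ?thesis using True by (auto simp: indicator_def)
      qed
    qed
    also have "\<dots> = T (\<delta> + sqrt u) + T (\<delta> + sqrt u)"
      by (subst nn_integral_add) (auto simp: T_def Tneg)
    also have "\<dots> = ennreal 2 * T (\<delta> + sqrt u)"
      by (simp add: mult_2)
    finally show ?thesis .
  qed
  have L2: "ennreal (1/2) * emeasure M EA \<le> E2"
  proof -
    have "emeasure M EA \<le> (\<integral>\<^sup>+u. ennreal 2 * (ennreal (F u) * T (\<delta> + sqrt u)) \<partial>lborel)"
      unfolding PA
    proof (intro nn_integral_mono_AE)
      show "AE u in lborel. ennreal (F u) * (\<integral>\<^sup>+z. ennreal (?N z) * indicator A2 (z,u) \<partial>lborel)
             \<le> ennreal 2 * (ennreal (F u) * T (\<delta> + sqrt u))"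
        using AE_lborel_singleton[of "\<delta>\<^sup>2"]
      proof (rule eventually_mono)
        fix u :: real assume "u \<noteq> \<delta>\<^sup>2"
        from H[OF this] have "ennreal (F u) * (\<integral>\<^sup>+z. ennreal (?N z) * indicator A2 (z,u) \<partial>lborel) \<le> ennreal (F u) * (ennreal 2 * T (\<delta> + sqrt u))"
          by (rule mult_left_mono) simp
        thus "ennreal (F u) * (\<integral>\<^sup>+z. ennreal (?N z) * indicator A2 (z,u) \<partial>lborel) \<le> ennreal 2 * (ennreal (F u) * T (\<delta> + sqrt u))"
          by (simp add: ac_simps)
      qed
    qed
    also have "\<dots> = ennreal 2 * E2" unfolding E2_def by (rule nn_integral_cmult) measurable
    finally have "ennreal (1/2) * emeasure M EA \<le> ennreal (1/2) * (ennreal 2 * E2)"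
      by (rule mult_left_mono) simp
    also have "ennreal (1/2) * (ennreal 2 * E2) = (ennreal (1/2) * ennreal 2) * E2"
      by (simp only: mult.assoc)
    also have "ennreal (1/2) * ennreal 2 = 1"
      by (subst ennreal_mult[symmetric]) auto
    also have "1 * E2 = E2" by simp
    finally show ?thesis .
  qed
  have mEA: "emeasure M EA = ennreal (measure M EA)" by (rule P.emeasure_eq_measure)
  have mE1: "emeasure M E1 = ennreal (measure M E1)" by (rule P.emeasure_eq_measure)
  have low: "1 / 2 * measure M EA * real k powr (- real d / p) \<le> measure M E1"
  proof -
    have "ennreal (real k powr (- real d / p)) * (ennreal (1/2) * emeasure M EA) \<le> ennreal (s powr (real d / 2)) * E2"
      unfolding spow by (rule mult_left_mono[OF L2]) simp
    also note L1
    finally have "ennreal (real k powr (- real d / p)) * (ennreal (1/2) * ennreal (measure M EA)) \<le> ennreal (measure M E1)"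
      unfolding mEA mE1 .
    moreover have x2: "ennreal (1/2 * measure M EA) = ennreal (1/2) * ennreal (measure M EA)"
      by (rule ennreal_mult) auto
    moreover have x1: "ennreal (real k powr (- real d / p) * (1/2 * measure M EA))
        = ennreal (real k powr (- real d / p)) * ennreal (1/2 * measure M EA)"
      by (rule ennreal_mult) auto
    ultimately have "ennreal (real k powr (- real d / p) * (1/2 * measure M EA)) \<le> ennreal (measure M E1)"
      by simp
    hence "real k powr (- real d / p) * (1/2 * measure M EA) \<le> measure M E1"
      by (subst (asm) ennreal_le_iff) auto
    thus ?thesis by (simp add: ac_simps)
  qed
  have up: "measure M E1 \<le> exp (- (1 + \<delta>\<^sup>2) / 2) * p / (2 * \<delta>\<^sup>2 * sqrt (real d))
               * (real k powr ((1 - real d) / p) / ln (real k))" if k2: "k \<ge> 2"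
  proof -
    have kg1: "real k > 1" using k2 by simp
    have "real k powr 0 < real k powr (2 / p)" using kg1 p by (intro powr_less_mono) auto
    hence kp: "real k powr (2 / p) > 1" using kg1 by simp
    hence cpos: "c > 0" by (simp add: c_def)
    define C0 where "C0 = exp (- \<delta>\<^sup>2 / 2) / (sqrt (2 * pi) * exp 1 * \<delta>\<^sup>2 * c * K)"
    have C00: "C0 \<ge> 0" using Kpos cpos \<delta> by (simp add: C0_def)
    define a where "a = (real d - 1) / 2"
    define b where "b = (1 + c\<^sup>2) / 2"
    have apos: "a > 0" using d by (simp add: a_def)
    have bpos: "b > 0" by (simp add: b_def add_pos_nonneg)
    have eqa: "real d / 2 - 1/2 - 1 = a - 1" by (simp add: a_def field_simps)
    have "emeasure M E1 \<le> (\<integral>\<^sup>+u. ennreal C0 * ennreal (indicator {0<..} u * u powr (a - 1) * exp (- (b * u))) \<partial>lborel)"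
      unfolding P1
    proof (intro nn_integral_mono)
      fix u :: real
      show "ennreal (F u) * T (\<delta> + sqrt u * c) \<le> ennreal C0 * ennreal (indicator {0<..} u * u powr (a - 1) * exp (- (b * u)))"
      proof (cases "u > 0")
        case False thus ?thesis by (simp add: Fdef)
      next
        case True
        define x where "x = \<delta> + sqrt u * c"
        have xpos: "x > 0" using True cpos \<delta> by (simp add: x_def add_pos_nonneg)
        have Nx0: "?N x / x \<ge> 0" using xpos normal_density_nonneg[of 0 1 x] by simp
        have "ennreal (F u) * T x \<le> ennreal (F u) * ennreal (?N x / x)"
          unfolding T_def by (rule mult_left_mono[OF normal_tail[OF xpos]]) simp
        also have "\<dots> = ennreal (F u * (?N x / x))" by (rule ennreal_mult[symmetric]) (use F0 Nx0 in auto)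
        also have "F u * (?N x / x) \<le> C0 * (u powr (a - 1) * exp (- (b * u)))"
          using up_point_gen[OF True cpos \<delta> Kpos, of "real d / 2"] True
          unfolding eqa by (simp add: Fdef x_def C0_def b_def)
        hence "ennreal (F u * (?N x / x)) \<le> ennreal (C0 * (u powr (a - 1) * exp (- (b * u))))"
          by (rule ennreal_leI)
        also have "\<dots> = ennreal C0 * ennreal (indicator {0<..} u * u powr (a - 1) * exp (- (b * u)))"
          using True C00 by (simp add: ennreal_mult)
        finally show ?thesis by (simp add: x_def)
      qed
    qed
    also have "\<dots> = ennreal C0 * ennreal (Gamma a / b powr a)"
      by (subst nn_integral_cmult) (auto simp: gamma_int[OF apos bpos])
    also have "\<dots> = ennreal (C0 * (Gamma a / b powr a))"
      by (rule ennreal_mult[symmetric]) (use C00 apos bpos Gamma_real_pos[OF apos] in auto)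
    finally have E1le: "emeasure M E1 \<le> ennreal (C0 * (Gamma a / b powr a))" .
    have X0: "C0 * (Gamma a / b powr a) \<ge> 0"
      using C00 Gamma_real_pos[OF apos] bpos by simp
    have m1: "measure M E1 \<le> C0 * (Gamma a / b powr a)"
      using E1le X0 unfolding mE1 by (simp add: ennreal_le_iff)
    define Q where "Q = real k powr ((real d - 1) / p)"
    define W where "W = (2::real) powr ((real d - 1) / 2)"
    have Qpos: "Q > 0" using kg1 by (simp add: Q_def)
    have Wpos: "W > 0" by (simp add: W_def)
    have e2p: "(2::real) powr (real d / 2) = W * sqrt 2"
    proof -
      have "real d / 2 = (real d - 1) / 2 + 1/2" by (simp add: field_simps)
      hence "(2::real) powr (real d / 2) = 2 powr ((real d - 1) / 2 + 1/2)" by (rule arg_cong)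
      also have "\<dots> = W * 2 powr (1/2)" unfolding W_def by (rule powr_add)
      also have "(2::real) powr (1/2) = sqrt 2" by (simp add: powr_half_sqrt)
      finally show ?thesis .
    qed
    have eK: "K = (W * sqrt 2) * Gamma (real d / 2)" by (simp add: K_def e2p)
    have e1c: "1 + c\<^sup>2 = real k powr (2 / p)" using c2 by simp
    have eB: "b powr a = Q / W"
    proof -
      have "b powr a = (real k powr (2 / p)) powr a / 2 powr a"
        unfolding b_def e1c by (rule powr_divide)
      also have "(real k powr (2 / p)) powr a = real k powr (2 / p * a)" by (simp add: powr_powr)
      also have "2 / p * a = (real d - 1) / p" using p by (simp add: a_def field_simps)
      finally show ?thesis by (simp add: Q_def W_def a_def)
    qed
    have eR: "exp (- (1 + \<delta>\<^sup>2) / 2) * p / (2 * \<delta>\<^sup>2 * sqrt (real d)) * (real k powr ((1 - real d) / p) / ln (real k))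
        = exp (- \<delta>\<^sup>2 / 2) * exp (- 1 / 2) * p / (2 * \<delta>\<^sup>2 * sqrt (real d)) * ((1 / Q) / ln (real k))"
    proof -
      have "exp (- (1 + \<delta>\<^sup>2) / 2) = exp (- \<delta>\<^sup>2 / 2) * exp (- 1 / 2)"
        by (simp add: exp_add[symmetric] field_simps)
      moreover have "real k powr ((1 - real d) / p) = 1 / Q"
      proof -
        have "(1 - real d) / p = - ((real d - 1) / p)" by (metis minus_diff_eq minus_divide_left)
        thus ?thesis by (simp add: Q_def powr_minus_divide)
      qed
      ultimately show ?thesis by simp
    qed
    have lnk: "ln (real k) \<le> p * c"
    proof -
      have "ln (1 + c\<^sup>2) = 2 / p * ln (real k)" unfolding e1c using kg1 by (simp add: ln_powr)
      with ln_sq_le[OF c0] have "2 / p * ln (real k) \<le> 2 * c" by simp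
      hence "p / 2 * (2 / p * ln (real k)) \<le> p / 2 * (2 * c)" using p by (intro mult_left_mono) auto
      thus ?thesis using p by simp
    qed
    have kk: "2 * sqrt 2 \<le> sqrt pi * (exp 1 * exp (- 1 / 2))"
    proof -
      have ee: "exp 1 * exp (- 1 / 2) = exp (1 / 2 :: real)" by (simp add: exp_add[symmetric])
      have "(2 * sqrt 2)\<^sup>2 = (8::real)" by (simp add: power_mult_distrib)
      also have "(8::real) \<le> pi * exp 1" by (rule pi_e_ge_8)
      also have "pi * exp 1 = (sqrt pi * exp (1 / 2 :: real))\<^sup>2"
      proof -
        have h1: "exp (1/2::real) * exp (1/2) = exp 1" by (simp add: exp_add[symmetric])
        have h2: "sqrt pi * sqrt pi = pi" by simp
        have "(sqrt pi * exp (1 / 2 :: real))\<^sup>2 = (sqrt pi * sqrt pi) * (exp (1/2) * exp (1/2))"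
          by (simp only: power2_eq_square ac_simps)
        thus ?thesis unfolding h1 h2 by simp
      qed
      finally have "(2 * sqrt 2)\<^sup>2 \<le> (sqrt pi * exp (1 / 2 :: real))\<^sup>2" .
      hence "2 * sqrt 2 \<le> sqrt pi * exp (1 / 2 :: real)" by (rule power2_le_imp_le) simp
      thus ?thesis unfolding ee .
    qed
    have gr: "Gamma a * sqrt (real d) \<le> 2 * sqrt 2 * Gamma (real d / 2)"
      unfolding a_def by (rule gamma_ratio[OF d])
    have "C0 * (Gamma a / b powr a)
        = exp (- \<delta>\<^sup>2 / 2) / ((sqrt 2 * sqrt pi) * exp 1 * \<delta>\<^sup>2 * c * ((W * sqrt 2) * Gamma (real d / 2))) * (Gamma a / (Q / W))"
      by (simp add: C0_def eK eB real_sqrt_mult)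
    also have "\<dots> \<le> exp (- \<delta>\<^sup>2 / 2) * exp (- 1 / 2) * p / (2 * \<delta>\<^sup>2 * sqrt (real d)) * ((1 / Q) / ln (real k))"
      by (rule final_abs[OF _ _ _ _ _ _ _ _ _ _ _ _ _ _ _ gr lnk kk])
         (use \<delta> cpos p Qpos Wpos kg1 d Gamma_real_pos[OF apos] Gamma_real_pos[of "real d / 2"] in auto)
    also have "\<dots> = exp (- (1 + \<delta>\<^sup>2) / 2) * p / (2 * \<delta>\<^sup>2 * sqrt (real d)) * (real k powr ((1 - real d) / p) / ln (real k))"
      by (rule eR[symmetric])
    finally show ?thesis using m1 by linarith
  qed
  show ?thesis using low up unfolding E1_def EA_def c_def by auto
qed

end
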